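(* Let $V,H,K,i,j,\mathfrak a,V_D$ be as in the standing setting. For $\mu\le 0$ and $f\in H$ let $R_\mu f$ be the unique $u\in V$ with $\mathfrak a(u,v)-\mu(j(u),j(v))_K+(u,v)_H=(f,v)_H$ for all $v\in V$ (i.e. $R_\mu=(I+A_\mu)^{-1}$), and let $R^D f$ be the unique $u\in V_D$ with $\mathfrak a(u,v)+(u,v)_H=(f,v)_H$ for all $v\in V_D$ (i.e. $R^D=(I+\widehat A^D)^{-1}$). Then $R_\mu$ and $R^D$ are bounded operators on $H$ and $\lim_{\mu\to-\infty}\|R_\mu-R^D\|_{\mathcal L(H)}=0$.
   Context: Standing setting: $V,H,K$ complex Hilbert spaces, $V$ embedded in $H$ with compact inclusion $i\colon V\to H$, $j\colon V\to K$ compact linear, $\mathfrak a\colon V\times V\to\mathbb C$ a positive ($\mathfrak a(u,u)\ge0$), symmetric ($\mathfrak a(v,u)=\overline{\mathfrak a(u,v)}$), continuous sesquilinear form which is $i$-elliptic: there are $\omega,\delta>0$ with $\mathfrak a(u,u)+\omega\|u\|_H^2\ge\delta\|u\|_V^2$ for all $u\in V$. $V_D=\ker j$. For $\mu\in\mathbb R$, $\mathfrak a_\mu(u,v)=\mathfrak a(u,v)-\mu(j(u),j(v))_K$, and $A_\mu$ denotes the self-adjoint graph in $H$ associated with $(\mathfrak a_\mu,i)$, i.e. $\{(u,f)\in H\times H: u\in V,\ \mathfrak a_\mu(u,v)=(f,v)_H\ \forall v\in V\}$; $\widehat A^D$ is the graph $\{(u,f): u\in V_D,\ \mathfrak a(u,v)=(f,v)_H\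 \forall v\in V_D\}$. *)

theory Defs
  imports "HOL-Analysis.Analysis"
begin

text \<open>A complex Hilbert space is modelled as a real Banach space type 'a together with
  a complex scalar multiplication cm extending the real one and a complex inner product ip
  (linear in the first, conjugate linear in the second argument) inducing the norm of 'a.\<close>

definition complex_hilbert :: "(complex \<Rightarrow> 'a::banach \<Rightarrow> 'a) \<Rightarrow> ('a \<Rightarrow> 'a \<Rightarrow> complex) \<Rightarrow> bool" where
  "complex_hilbert cm ip \<longleftrightarrow>
     (\<forall>r x. cm (complex_of_real r) x = r *\<^sub>R x) \<and>
     (\<forall>a b x. cm (a * b) x = cm a (cm b x)) \<and>
     (\<forall>a x y. cm a (x + y) = cm a x + cm a y) \<and>
     (\<forall>a b x. cm (a + b) x = cm a x + cm b x) \<and>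
     (\<forall>x y z. ip (x + y) z = ip x z + ip y z) \<and>
     (\<forall>c x y. ip (cm c x) y = c * ip x y) \<and>
     (\<forall>x y. ip y x = cnj (ip x y)) \<and>
     (\<forall>x. (norm x)\<^sup>2 = Re (ip x x))"

definition cbounded_linear :: "(complex \<Rightarrow> 'a::real_normed_vector \<Rightarrow> 'a) \<Rightarrow> (complex \<Rightarrow> 'b::real_normed_vector \<Rightarrow> 'b) \<Rightarrow> ('a \<Rightarrow> 'b) \<Rightarrow> bool" where
  "cbounded_linear cmA cmB T \<longleftrightarrow> bounded_linear T \<and> (\<forall>c x. T (cmA c x) = cmB c (T x))"

definition compact_op :: "(complex \<Rightarrow> 'a::real_normed_vector \<Rightarrow> 'a) \<Rightarrow> (complex \<Rightarrow> 'b::real_normed_vector \<Rightarrow> 'b) \<Rightarrow> ('a \<Rightarrow> 'b) \<Rightarrow> bool" where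
  "compact_op cmA cmB T \<longleftrightarrow> cbounded_linear cmA cmB T \<and> compact (closure (T ` ball 0 1))"

definition sesquilinear_cont :: "(complex \<Rightarrow> 'a::real_normed_vector \<Rightarrow> 'a) \<Rightarrow> ('a \<Rightarrow> 'a \<Rightarrow> complex) \<Rightarrow> bool" where
  "sesquilinear_cont cm a \<longleftrightarrow>
     (\<forall>u u' v. a (u + u') v = a u v + a u' v) \<and>
     (\<forall>c u v. a (cm c u) v = c * a u v) \<and>
     (\<forall>u v v'. a u (v + v') = a u v + a u v') \<and>
     (\<forall>c u v. a u (cm c v) = cnj c * a u v) \<and>
     (\<exists>M. \<forall>u v. cmod (a u v) \<le> M * norm u * norm v)"

definition R_mu :: "('v \<Rightarrow> 'v \<Rightarrow> complex) \<Rightarrow> ('h \<Rightarrow> 'h \<Rightarrow> complex) \<Rightarrow> ('k \<Rightarrow> 'k \<Rightarrow> complex)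
    \<Rightarrow> ('v \<Rightarrow> 'h) \<Rightarrow> ('v \<Rightarrow> 'k) \<Rightarrow> real \<Rightarrow> 'h \<Rightarrow> 'h" where
  "R_mu a ipH ipK i j \<mu> f = i (THE u. \<forall>v. a u v - complex_of_real \<mu> * ipK (j u) (j v) + ipH (i u) (i v) = ipH f (i v))"

definition R_D :: "('v \<Rightarrow> 'v \<Rightarrow> complex) \<Rightarrow> ('h \<Rightarrow> 'h \<Rightarrow> complex)
    \<Rightarrow> ('v \<Rightarrow> 'h) \<Rightarrow> ('v \<Rightarrow> 'k::zero) \<Rightarrow> 'h \<Rightarrow> 'h" where
  "R_D a ipH i j f = i (THE u. j u = 0 \<and> (\<forall>v. j v = 0 \<longrightarrow> a u v + ipH (i u) (i v) = ipH f (i v)))"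

end

theory Submission
  imports Defs "HOL-Analysis.Analysis"
begin



lemma quad_zero:
  fixes A C :: real
  assumes "\<And>t. 0 \<le> 2*t*A + t^2*C"
  shows "A = 0"
proof (rule ccontr)
  assume nz: "A \<noteq> 0"
  define D where "D = \<bar>C\<bar> + 1"
  have D: "D > 0" "\<bar>C\<bar> \<le> D" unfolding D_def by auto
  define t where "t = - A / D"
  have "0 \<le> 2*t*A + t^2*C" by (rule assms)
  also have "t^2*C \<le> t^2 * D" using D by (intro mult_left_mono) auto
  also have "t^2 * D = (A^2) / D" unfolding t_def using D by (simp add: power2_eq_square field_simps)
  also have "2*t*A = - 2 * A^2 / D" unfolding t_def by (simp add: power2_eq_square field_simps)
  finally have "0 \<le> - (A^2) / D" by simp
  moreover have "(A^2) / D > 0" using nz D by simp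
  ultimately show False by simp
qed

locale lm =
  fixes B :: "'a::banach \<Rightarrow> 'a \<Rightarrow> real" and M :: "'a set" and c :: real
  assumes bb: "bounded_bilinear B" and sym: "\<And>u v. B u v = B v u"
    and sub: "subspace M" and clo: "closed M" and cpos: "c > 0"
    and coer: "\<And>u. u \<in> M \<Longrightarrow> c * (norm u)^2 \<le> B u u"
begin

interpretation B: bounded_bilinear B by (rule bb)

lemma M0: "0 \<in> M" using sub by (simp add: subspace_0)
lemma Madd: "x \<in> M \<Longrightarrow> y \<in> M \<Longrightarrow> x + y \<in> M" using sub by (simp add: subspace_add)
lemma Msc: "x \<in> M \<Longrightarrow> r *\<^sub>R x \<in> M" using sub by (simp add: subspace_scale)
lemma Mdiff: "x \<in> M \<Longrightarrow> y \<in> M \<Longrightarrow> x - y \<in> M" using sub by (simp add: subspace_diff)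

lemma unique:
  assumes "u \<in> M" "\<forall>v\<in>M. B u v = L v" "u' \<in> M" "\<forall>v\<in>M. B u' v = L v"
  shows "u = u'"
proof -
  have d: "u - u' \<in> M" using assms Mdiff by auto
  have "B (u - u') (u - u') = 0" using assms d by (simp add: B.diff_left)
  with coer[OF d] cpos have "(norm (u - u'))^2 \<le> 0"
    by (metis mult_le_0_iff not_less zero_less_power2 norm_ge_zero power2_less_0)
  then show ?thesis by simp
qed

lemma exists:
  assumes L: "bounded_linear L"
  shows "\<exists>u\<in>M. \<forall>v\<in>M. B u v = L v"
proof -
  interpret L: bounded_linear L by (rule L)
  obtain K where K: "K > 0" "\<And>x. norm (L x) \<le> norm x * K" using L.pos_bounded by blast
  define E where "E x = B x x - 2 * L x" for x
  have lowb: "- (K^2) / c \<le> E x" if "x \<in> M" for x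
  proof -
    have h1: "c * (c * (norm x)^2) \<le> c * B x x" using coer[OF that] cpos by (intro mult_left_mono) auto
    have h2: "c * L x \<le> c * (norm x * K)" using K(2)[of x] cpos by (intro mult_left_mono) auto
    have h3: "0 \<le> (c * norm x - K)^2" by simp
    have "- (K^2) \<le> c * E x" unfolding E_def using h1 h2 h3
      by (simp add: power2_eq_square algebra_simps)
    then show ?thesis using cpos by (simp add: divide_simps mult.commute)
  qed
  define m where "m = Inf (E ` M)"
  have bdd: "bdd_below (E ` M)" using lowb by (auto intro!: bdd_belowI)
  have ne: "E ` M \<noteq> {}" using M0 by auto
  have mle: "m \<le> E x" if "x \<in> M" for x unfolding m_def using bdd that by (auto intro: cInf_lower)
  have "\<exists>x\<in>M. E x < m + 1 / Suc n" for n
  proof -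
    have "Inf (E ` M) < m + 1 / Suc n" unfolding m_def by simp
    then obtain y where "y \<in> E ` M" "y < m + 1 / Suc n" using cInf_lessD[OF ne] by blast
    then show ?thesis by auto
  qed
  then obtain xs where xs: "\<And>n. xs n \<in> M" "\<And>n. E (xs n) < m + 1 / Suc n" by metis
  have par: "B (x - y) (x - y) / 2 = E x + E y - 2 * E ((1/2) *\<^sub>R (x + y))" for x y
    unfolding E_def
    by (simp add: B.diff_left B.diff_right B.add_left B.add_right B.scaleR_left B.scaleR_right
        L.add L.scaleR sym[of y x] algebra_simps add_divide_distrib diff_divide_distrib)
  have cau: "c * (norm (xs n - xs k))^2 \<le> 2 * (1 / Suc n + 1 / Suc k)" for n k
  proof -
    have mid: "(1/2) *\<^sub>R (xs n + xs k) \<in> M" using xs(1) Madd Msc by blast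
    have "c * (norm (xs n - xs k))^2 \<le> B (xs n - xs k) (xs n - xs k)" using coer Mdiff xs(1) by blast
    also have "\<dots> = 2 * (E (xs n) + E (xs k) - 2 * E ((1/2) *\<^sub>R (xs n + xs k)))" using par[of "xs n" "xs k"] by simp
    also have "\<dots> \<le> 2 * (1 / Suc n + 1 / Suc k)" using xs(2)[of n] xs(2)[of k] mle[OF mid] by simp
    finally show ?thesis .
  qed
  have "Cauchy xs"
  proof (rule CauchyI)
    fix e :: real assume e: "e > 0"
    obtain N :: nat where N: "4 / (c * e^2) < N" using reals_Archimedean2 by blast
    have "norm (xs n - xs k) < e" if "n \<ge> N" "k \<ge> N" for n k
    proof -
      have "1 / real (Suc n) \<le> 1 / Suc N" "1 / real (Suc k) \<le> 1 / Suc N"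
        using that by (auto simp: divide_simps)
      with cau[of n k] have "c * (norm (xs n - xs k))^2 \<le> 4 / Suc N" by simp
      also have "4 / Suc N < c * e^2"
      proof -
        have "4 / (c * e^2) < Suc N" using N by simp
        then show ?thesis using cpos e by (simp add: divide_simps mult.commute)
      qed
      finally have "(norm (xs n - xs k))^2 < e^2" using cpos by simp
      then show ?thesis using e by (simp add: power_less_imp_less_base)
    qed
    then show "\<exists>M. \<forall>m\<ge>M. \<forall>n\<ge>M. norm (xs m - xs n) < e" by blast
  qed
  then obtain u where u: "xs \<longlonglongrightarrow> u" using Cauchy_convergent_iff convergent_def by blast
  have uM: "u \<in> M" using clo u xs(1) closed_sequentially by blast
  have "(\<lambda>n. E (xs n)) \<longlonglongrightarrow> E u" unfolding E_def
    by (intro tendsto_intros B.tendsto L.tendsto u)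
  moreover have "(\<lambda>n. E (xs n)) \<longlonglongrightarrow> m"
  proof (rule tendsto_sandwich[of "\<lambda>n. m" _ _ "\<lambda>n. m + 1 / Suc n"])
    show "\<forall>\<^sub>F n in sequentially. m \<le> E (xs n)" using mle xs(1) by auto
    show "\<forall>\<^sub>F n in sequentially. E (xs n) \<le> m + 1 / Suc n" using xs(2) less_imp_le by (intro always_eventually) blast
    show "(\<lambda>n. m) \<longlonglongrightarrow> m" by simp
    have "(\<lambda>n. 1 / real (Suc n)) \<longlonglongrightarrow> 0" using LIMSEQ_inverse_real_of_nat by (simp add: inverse_eq_divide)
    then show "(\<lambda>n. m + 1 / real (Suc n)) \<longlonglongrightarrow> m" using tendsto_add[of "\<lambda>n. m" m] by fastforce
  qed
  ultimately have Eu: "E u = m" using LIMSEQ_unique by blast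
  have "B u v = L v" if v: "v \<in> M" for v
  proof -
    have "0 \<le> 2*t*(B u v - L v) + t^2 * B v v" for t
    proof -
      have "u + t *\<^sub>R v \<in> M" using uM v Madd Msc by blast
      then have "E u \<le> E (u + t *\<^sub>R v)" using mle Eu by simp
      moreover have "E (u + t *\<^sub>R v) = E u + 2*t*(B u v - L v) + t^2 * B v v"
        unfolding E_def by (simp add: B.add_left B.add_right B.scaleR_left B.scaleR_right
            L.add L.scaleR sym[of v u] algebra_simps power2_eq_square)
      ultimately show ?thesis by simp
    qed
    then show ?thesis using quad_zero[of "B u v - L v" "B v v"] by simp
  qed
  with uM show ?thesis by blast
qed

definition sol :: "('a \<Rightarrow> real) \<Rightarrow> 'a" where
  "sol L = (THE u. u \<in> M \<and> (\<forall>v\<in>M. B u v = L v))"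

lemma sol:
  assumes "bounded_linear L"
  shows "sol L \<in> M" "\<And>v. v \<in> M \<Longrightarrow> B (sol L) v = L v"
proof -
  have "\<exists>!u. u \<in> M \<and> (\<forall>v\<in>M. B u v = L v)" using exists[OF assms] unique by blast
  then have "sol L \<in> M \<and> (\<forall>v\<in>M. B (sol L) v = L v)" unfolding sol_def by (rule theI')
  then show "sol L \<in> M" "\<And>v. v \<in> M \<Longrightarrow> B (sol L) v = L v" by auto
qed

lemma sol_eq:
  assumes "bounded_linear L" "u \<in> M" "\<And>v. v \<in> M \<Longrightarrow> B u v = L v"
  shows "sol L = u"
  using unique[of "sol L" L u] sol[OF assms(1)] assms by auto

lemma sol_norm:
  assumes "bounded_linear L" "\<And>v. v \<in> M \<Longrightarrow> \<bar>L v\<bar> \<le> K * norm v" "K \<ge> 0"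
  shows "norm (sol L) \<le> K / c"
proof -
  let ?u = "sol L"
  have "c * (norm ?u)^2 \<le> B ?u ?u" using coer sol[OF assms(1)] by blast
  also have "\<dots> = L ?u" using sol[OF assms(1)] by blast
  also have "\<dots> \<le> K * norm ?u" using assms(2)[OF sol(1)[OF assms(1)]] by simp
  finally have h: "c * (norm ?u)^2 \<le> K * norm ?u" .
  show ?thesis
  proof (cases "norm ?u = 0")
    case True
    show ?thesis using True cpos assms(3) by simp
  next
    case False
    then have "c * norm ?u \<le> K" using h by (simp add: power2_eq_square)
    then show ?thesis using cpos by (simp add: field_simps mult.commute)
  qed
qed

end



lemma discr:
  fixes A Bq C :: real
  assumes "\<And>t. 0 \<le> A + 2*t*Bq + t^2*C" "C \<ge> 0"
  shows "Bq^2 \<le> A * C"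
proof (cases "C = 0")
  case True
  show ?thesis
  proof (rule ccontr)
    assume "\<not> ?thesis"
    then have nz: "Bq \<noteq> 0" using True by auto
    define t where "t = -(A+1)/(2*Bq)"
    have "0 \<le> A + 2*t*Bq + t^2*C" by (rule assms(1))
    moreover have "2*t*Bq = -(A+1)" unfolding t_def using nz by simp
    ultimately show False using True by simp
  qed
next
  case False
  then have C: "C > 0" using assms(2) by auto
  define t where "t = -Bq/C"
  have "0 \<le> A + 2*t*Bq + t^2*C" by (rule assms(1))
  moreover have "2*t*Bq = -2*Bq^2/C" unfolding t_def by (simp add: power2_eq_square)
  moreover have "t^2*C = Bq^2/C" unfolding t_def using C by (simp add: power2_eq_square)
  ultimately have "0 \<le> A - Bq^2 / C" by simp
  then have "Bq^2 / C \<le> A" by simp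
  then show ?thesis using C by (simp add: pos_divide_le_eq mult.commute)
qed

lemma ch_props:
  assumes "complex_hilbert cm ip"
  shows "\<And>r x. cm (complex_of_real r) x = r *\<^sub>R x"
    and "\<And>a b x. cm (a * b) x = cm a (cm b x)"
    and "\<And>a x y. cm a (x + y) = cm a x + cm a y"
    and "\<And>x y z. ip (x + y) z = ip x z + ip y z"
    and "\<And>c x y. ip (cm c x) y = c * ip x y"
    and "\<And>x y. ip y x = cnj (ip x y)"
    and "\<And>x. (norm x)\<^sup>2 = Re (ip x x)"
  using assms unfolding complex_hilbert_def by blast+

lemma ch_right:
  assumes "complex_hilbert cm ip"
  shows "ip x (y + z) = ip x y + ip x z" "ip x (cm c y) = cnj c * ip x y"
proof -
  note p = ch_props[OF assms]
  show "ip x (y + z) = ip x y + ip x z"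
  proof -
    have "ip x (y + z) = cnj (ip (y + z) x)" by (rule p(6))
    also have "\<dots> = cnj (ip y x) + cnj (ip z x)" by (simp add: p(4))
    also have "\<dots> = ip x y + ip x z" using p(6)[of y x] p(6)[of z x] by simp
    finally show ?thesis .
  qed
  show "ip x (cm c y) = cnj c * ip x y"
  proof -
    have "ip x (cm c y) = cnj (ip (cm c y) x)" by (rule p(6))
    also have "\<dots> = cnj c * cnj (ip y x)" by (simp add: p(5))
    also have "\<dots> = cnj c * ip x y" using p(6)[of y x] by simp
    finally show ?thesis .
  qed
qed

lemma ch_cm0: "complex_hilbert cm ip \<Longrightarrow> cm c 0 = 0"
  using ch_props(3)[of cm ip c 0 0] by simp

context fixes cm :: "complex \<Rightarrow> 'a::banach \<Rightarrow> 'a" and ip assumes ch: "complex_hilbert cm ip"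
begin
lemma re_aL: "Re (ip (x + x') y) = Re (ip x y) + Re (ip x' y)" by (simp add: ch_props(4)[OF ch])
lemma re_aR: "Re (ip x (y + y')) = Re (ip x y) + Re (ip x y')" by (simp add: ch_right(1)[OF ch])
lemma re_sL: "Re (ip (r *\<^sub>R x) y) = r * Re (ip x y)"
  using ch_props(5)[OF ch, of "complex_of_real r" x y] ch_props(1)[OF ch, of r x] by simp
lemma re_sR: "Re (ip x (r *\<^sub>R y)) = r * Re (ip x y)"
  using ch_right(2)[OF ch, of x "complex_of_real r" y] ch_props(1)[OF ch, of r y] by simp
lemma re_sym: "Re (ip x y) = Re (ip y x)"
proof -
  have "Re (ip y x) = Re (cnj (ip x y))" using ch_props(6)[OF ch, of y x] by simp
  then show ?thesis by simp
qed
lemma re_nn: "Re (ip x x) = (norm x)^2" using ch_props(7)[OF ch, of x] by simp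
lemma re_cs: "\<bar>Re (ip x y)\<bar> \<le> norm x * norm y"
proof -
  have "0 \<le> (norm x)^2 + 2*t*Re (ip x y) + t^2*(norm y)^2" for t
  proof -
    have "0 \<le> Re (ip (x + t *\<^sub>R y) (x + t *\<^sub>R y))" using re_nn by simp
    also have "\<dots> = (norm x)^2 + 2*t*Re (ip x y) + t^2*(norm y)^2"
      unfolding re_aL re_aR re_sL re_sR by (simp add: re_nn re_sym[of y x] power2_eq_square algebra_simps)
    finally show ?thesis .
  qed
  then have "(Re (ip x y))^2 \<le> (norm x)^2 * (norm y)^2" by (intro discr) auto
  then have "(Re (ip x y))^2 \<le> (norm x * norm y)^2" by (simp add: power_mult_distrib)
  then have "\<bar>Re (ip x y)\<bar> \<le> \<bar>norm x * norm y\<bar>" using abs_le_square_iff by blast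
  then show ?thesis by simp
qed
lemma re_bb: "bounded_bilinear (\<lambda>x y. Re (ip x y))"
proof
  show "\<exists>K. \<forall>a b. norm (Re (ip a b)) \<le> norm a * norm b * K"
    using re_cs by (intro exI[of _ 1]) simp
qed (simp_all add: re_aL re_aR re_sL re_sR)
end



lemma subspace_closure_rnv:
  fixes S :: "'a::real_normed_vector set"
  assumes S: "subspace S"
  shows "subspace (closure S)"
  unfolding subspace_def
proof (intro conjI ballI allI)
  show "0 \<in> closure S" using S subspace_0 closure_subset by blast
next
  fix x y assume x: "x \<in> closure S" and y: "y \<in> closure S"
  show "x + y \<in> closure S"
    unfolding closure_approachable
  proof (intro allI impI)
    fix e :: real assume e: "e > 0"
    obtain x' where x': "x' \<in> S" "dist x' x < e/2" using x e closure_approachable by (metis half_gt_zero)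
    obtain y' where y': "y' \<in> S" "dist y' y < e/2" using y e closure_approachable by (metis half_gt_zero)
    have "x' + y' \<in> S" using S x' y' subspace_add by blast
    moreover have "dist (x' + y') (x + y) < e"
      using x' y' dist_triangle_add[of x' y' x y] by simp
    ultimately show "\<exists>z\<in>S. dist z (x + y) < e" by blast
  qed
next
  fix r :: real and x assume x: "x \<in> closure S"
  show "r *\<^sub>R x \<in> closure S"
    unfolding closure_approachable
  proof (intro allI impI)
    fix e :: real assume e: "e > 0"
    have e': "e / (\<bar>r\<bar> + 1) > 0" using e by simp
    obtain x' where x': "x' \<in> S" "dist x' x < e / (\<bar>r\<bar> + 1)" using x e' closure_approachable by metis
    have "r *\<^sub>R x' \<in> S" using S x' subspace_scale by blast
    moreover have "dist (r *\<^sub>R x') (r *\<^sub>R x) < e"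
    proof -
      have "dist (r *\<^sub>R x') (r *\<^sub>R x) = \<bar>r\<bar> * dist x' x"
        by (simp add: dist_norm flip: scaleR_diff_right)
      also have "\<dots> \<le> (\<bar>r\<bar> + 1) * dist x' x" by (simp add: mult_right_mono)
      also have "\<dots> < (\<bar>r\<bar> + 1) * (e / (\<bar>r\<bar> + 1))"
        using x'(2) by (intro mult_strict_left_mono) auto
      also have "\<dots> = e" by simp
      finally show ?thesis .
    qed
    ultimately show "\<exists>z\<in>S. dist z (r *\<^sub>R x) < e" by blast
  qed
qed

locale prb =
  fixes cmV :: "complex \<Rightarrow> 'v::banach \<Rightarrow> 'v" and ipV :: "'v \<Rightarrow> 'v \<Rightarrow> complex"
    and cmH :: "complex \<Rightarrow> 'h::banach \<Rightarrow> 'h" and ipH :: "'h \<Rightarrow> 'h \<Rightarrow> complex"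
    and cmK :: "complex \<Rightarrow> 'k::banach \<Rightarrow> 'k" and ipK :: "'k \<Rightarrow> 'k \<Rightarrow> complex"
    and i :: "'v \<Rightarrow> 'h" and j :: "'v \<Rightarrow> 'k" and a :: "'v \<Rightarrow> 'v \<Rightarrow> complex"
  assumes V: "complex_hilbert cmV ipV"
    and H: "complex_hilbert cmH ipH"
    and K: "complex_hilbert cmK ipK"
    and i_compact: "compact_op cmV cmH i" and i_inj: "inj i"
    and j_compact: "compact_op cmV cmK j"
    and a_form: "sesquilinear_cont cmV a"
    and a_pos: "\<forall>u. Im (a u u) = 0 \<and> Re (a u u) \<ge> 0"
    and a_sym: "\<forall>u v. a v u = cnj (a u v)"
    and a_ell: "\<exists>\<omega>>0. \<exists>\<delta>>0. \<forall>u. Re (a u u) + \<omega> * (norm (i u))\<^sup>2 \<ge> \<delta> * (norm u)\<^sup>2"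
begin

lemma i_bl: "bounded_linear i" and i_cm: "\<And>c x. i (cmV c x) = cmH c (i x)"
  using i_compact unfolding compact_op_def cbounded_linear_def by auto
lemma j_bl: "bounded_linear j" and j_cm: "\<And>c x. j (cmV c x) = cmK c (j x)"
  using j_compact unfolding compact_op_def cbounded_linear_def by auto

interpretation i: bounded_linear i by (rule i_bl)
interpretation j: bounded_linear j by (rule j_bl)

definition "reH x y = Re (ipH x y)"
definition "reK x y = Re (ipK x y)"

lemma reH_bb: "bounded_bilinear reH" unfolding reH_def[abs_def] by (rule re_bb[OF H])
lemma reK_bb: "bounded_bilinear reK" unfolding reK_def[abs_def] by (rule re_bb[OF K])
lemma reH_cs: "\<bar>reH x y\<bar> \<le> norm x * norm y" unfolding reH_def by (rule re_cs[OF H])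
lemma reK_cs: "\<bar>reK x y\<bar> \<le> norm x * norm y" unfolding reK_def by (rule re_cs[OF K])
lemma reH_sym: "reH x y = reH y x" unfolding reH_def by (rule re_sym[OF H])
lemma reK_sym: "reK x y = reK y x" unfolding reK_def by (rule re_sym[OF K])
lemma reH_nn: "reH x x = (norm x)^2" unfolding reH_def by (rule re_nn[OF H])
lemma reK_nn: "reK x x = (norm x)^2" unfolding reK_def by (rule re_nn[OF K])

interpretation reH: bounded_bilinear reH by (rule reH_bb)
interpretation reK: bounded_bilinear reK by (rule reK_bb)

lemma cmV_real: "cmV (complex_of_real r) x = r *\<^sub>R x" by (rule ch_props(1)[OF V])
lemma cmH_real: "cmH (complex_of_real r) x = r *\<^sub>R x" by (rule ch_props(1)[OF H])

lemma a_addL: "a (u + u') v = a u v + a u' v"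
  and a_cmL: "a (cmV c u) v = c * a u v"
  and a_addR: "a u (v + v') = a u v + a u v'"
  and a_cmR: "a u (cmV c v) = cnj c * a u v"
  using a_form unfolding sesquilinear_cont_def by auto

lemma a_bound: "\<exists>M\<ge>0. \<forall>u v. cmod (a u v) \<le> M * norm u * norm v"
proof -
  obtain M where M: "\<forall>u v. cmod (a u v) \<le> M * norm u * norm v"
    using a_form unfolding sesquilinear_cont_def by auto
  show ?thesis
  proof (intro exI[of _ "max M 0"] conjI allI)
    fix u v :: 'v
    have "M * norm u * norm v \<le> max M 0 * norm u * norm v"
      by (intro mult_right_mono) auto
    then show "cmod (a u v) \<le> max M 0 * norm u * norm v" using M by (meson order_trans)
  qed simp
qed

definition "ra u v = Re (a u v)"

lemma ra_bb: "bounded_bilinear ra"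
proof
  fix u u' v v' :: 'v and r :: real
  show "ra (u + u') v = ra u v + ra u' v" unfolding ra_def by (simp add: a_addL)
  show "ra u (v + v') = ra u v + ra u v'" unfolding ra_def by (simp add: a_addR)
  show "ra (r *\<^sub>R u) v = r *\<^sub>R ra u v" unfolding ra_def
    using a_cmL[of "complex_of_real r" u v] cmV_real[of r u] by simp
  show "ra u (r *\<^sub>R v) = r *\<^sub>R ra u v" unfolding ra_def
    using a_cmR[of u "complex_of_real r" v] cmV_real[of r v] by simp
next
  obtain M where M: "\<forall>u v. cmod (a u v) \<le> M * norm u * norm v" using a_bound by auto
  show "\<exists>K. \<forall>u v. norm (ra u v) \<le> norm u * norm v * K"
  proof (intro exI allI)
    fix u v
    have "norm (ra u v) \<le> cmod (a u v)" unfolding ra_def by (simp add: abs_Re_le_cmod)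
    also have "\<dots> \<le> norm u * norm v * M" using M by (simp add: mult.commute mult.left_commute)
    finally show "norm (ra u v) \<le> norm u * norm v * M" .
  qed
qed

lemma ra_sym: "ra u v = ra v u"
proof -
  have "a v u = cnj (a u v)" using a_sym by blast
  then show ?thesis unfolding ra_def by simp
qed
lemma ra_nonneg: "ra u u \<ge> 0" unfolding ra_def using a_pos by auto

interpretation ra: bounded_bilinear ra by (rule ra_bb)

definition "B u v = ra u v + reH (i u) (i v)"
definition "Bt t u v = B u v + t * reK (j u) (j v)"
definition "VD = {v. j v = 0}"

lemma Bt_bb: "bounded_bilinear (Bt t)"
proof -
  have h1: "bounded_bilinear (\<lambda>u v. reH (i u) (i v))" by (rule reH.comp[OF i_bl i_bl])
  have h2: "bounded_bilinear (\<lambda>u v. reK (j u) (j v))" by (rule reK.comp[OF j_bl j_bl])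
  interpret h1: bounded_bilinear "\<lambda>u v. reH (i u) (i v)" by (rule h1)
  interpret h2: bounded_bilinear "\<lambda>u v. reK (j u) (j v)" by (rule h2)
  show ?thesis
  proof
    fix u u' v v' :: 'v and r :: real
    show "Bt t (u + u') v = Bt t u v + Bt t u' v" unfolding Bt_def B_def
      by (simp add: ra.add_left h1.add_left h2.add_left algebra_simps)
    show "Bt t u (v + v') = Bt t u v + Bt t u v'" unfolding Bt_def B_def
      by (simp add: ra.add_right h1.add_right h2.add_right algebra_simps)
    show "Bt t (r *\<^sub>R u) v = r *\<^sub>R Bt t u v" unfolding Bt_def B_def
      using ra.scaleR_left h1.scaleR_left h2.scaleR_left by (simp add: algebra_simps)
    show "Bt t u (r *\<^sub>R v) = r *\<^sub>R Bt t u v" unfolding Bt_def B_def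
      using ra.scaleR_right h1.scaleR_right h2.scaleR_right by (simp add: algebra_simps)
  next
    obtain K1 where K1: "\<forall>u v. norm (ra u v) \<le> norm u * norm v * K1" using ra.bounded by blast
    obtain K2 where K2: "\<forall>u v. norm (reH (i u) (i v)) \<le> norm u * norm v * K2" using h1.bounded by blast
    obtain K3 where K3: "\<forall>u v. norm (reK (j u) (j v)) \<le> norm u * norm v * K3" using h2.bounded by blast
    show "\<exists>K. \<forall>u v. norm (Bt t u v) \<le> norm u * norm v * K"
    proof (intro exI allI)
      fix u v
      have "norm (Bt t u v) \<le> norm (ra u v) + norm (reH (i u) (i v)) + \<bar>t\<bar> * norm (reK (j u) (j v))"
      proof -
        have e: "\<bar>t * reK (j u) (j v)\<bar> = \<bar>t\<bar> * \<bar>reK (j u) (j v)\<bar>" by (rule abs_mult)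
        show ?thesis unfolding Bt_def B_def real_norm_def using e by arith
      qed
      also have "\<dots> \<le> norm u * norm v * K1 + norm u * norm v * K2 + \<bar>t\<bar> * (norm u * norm v * K3)"
        using K1 K2 K3 by (intro add_mono mult_left_mono) auto
      finally show "norm (Bt t u v) \<le> norm u * norm v * (K1 + K2 + \<bar>t\<bar> * K3)"
        by (simp add: algebra_simps)
    qed
  qed
qed

lemma Bt0: "Bt 0 = B" by (auto simp: Bt_def fun_eq_iff)

lemma B_bb: "bounded_bilinear B" using Bt_bb[of 0] by (simp add: Bt0)

interpretation B: bounded_bilinear B by (rule B_bb)

lemma B_sym: "B u v = B v u" unfolding B_def using ra_sym reH_sym by metis
lemma Bt_sym: "Bt t u v = Bt t v u" unfolding Bt_def using B_sym reK_sym by metis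

definition "cc = (SOME c. c > 0 \<and> (\<forall>u. c * (norm u)^2 \<le> B u u))"

lemma cc_ex: "\<exists>c. c > 0 \<and> (\<forall>u. c * (norm u)^2 \<le> B u u)"
proof -
  obtain \<omega> \<delta> where od: "\<omega> > 0" "\<delta> > 0" "\<And>u. Re (a u u) + \<omega> * (norm (i u))\<^sup>2 \<ge> \<delta> * (norm u)\<^sup>2"
    using a_ell by blast
  define m where "m = max 1 \<omega>"
  have m: "m \<ge> 1" "m \<ge> \<omega>" unfolding m_def by auto
  show ?thesis
  proof (intro exI conjI allI)
    show "\<delta> / m > 0" using od m by simp
    fix u
    have r0: "ra u u \<ge> 0" by (rule ra_nonneg)
    have q1: "ra u u \<le> m * ra u u" using mult_right_mono[OF m(1) r0] by simp
    have q2: "\<omega> * (norm (i u))\<^sup>2 \<le> m * (norm (i u))\<^sup>2" using m(2) by (intro mult_right_mono) auto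
    have "\<delta> * (norm u)\<^sup>2 \<le> ra u u + \<omega> * (norm (i u))\<^sup>2" using od(3)[of u] unfolding ra_def .
    also have "\<dots> \<le> m * ra u u + m * (norm (i u))\<^sup>2" using q1 q2 by simp
    also have "\<dots> = m * B u u" unfolding B_def reH_nn by (simp add: algebra_simps)
    finally show "\<delta> / m * (norm u)\<^sup>2 \<le> B u u" using m by (simp add: field_simps)
  qed
qed

lemma cc_pos: "cc > 0" using someI_ex[OF cc_ex] unfolding cc_def by auto
lemma cc_coer: "cc * (norm u)^2 \<le> B u u" using someI_ex[OF cc_ex] unfolding cc_def by auto

lemma Bt_coer: "t \<ge> 0 \<Longrightarrow> cc * (norm u)^2 \<le> Bt t u u"
  using cc_coer[of u] unfolding Bt_def reK_nn by (smt (verit) mult_nonneg_nonneg zero_le_power2)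

lemma VD_sub: "subspace VD" unfolding VD_def subspace_def by (simp add: j.zero j.add j.scaleR)
lemma VD_closed: "closed VD" unfolding VD_def
  by (rule closed_Collect_eq) (auto intro: linear_continuous_on j_bl)

lemma lmt: "t \<ge> 0 \<Longrightarrow> lm (Bt t) UNIV cc"
  by (rule lm.intro) (auto simp: Bt_bb Bt_sym Bt_coer cc_pos)
lemma lmB: "lm B UNIV cc"
  by (rule lm.intro) (auto simp: B_bb B_sym cc_pos cc_coer)
lemma lmD: "subspace M \<Longrightarrow> closed M \<Longrightarrow> lm B M cc"
  by (rule lm.intro) (auto simp: B_bb B_sym cc_pos cc_coer)

end



context prb begin

interpretation i: bounded_linear i by (rule i_bl)
interpretation j: bounded_linear j by (rule j_bl)
interpretation reH: bounded_bilinear reH by (rule reH_bb)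
interpretation reK: bounded_bilinear reK by (rule reK_bb)
interpretation B: bounded_bilinear B by (rule B_bb)

definition "Ki = (SOME K. K > 0 \<and> (\<forall>x. norm (i x) \<le> norm x * K))"
lemma Ki: "Ki > 0" "norm (i x) \<le> norm x * Ki"
  using someI_ex[OF i.pos_bounded] unfolding Ki_def by auto

definition "LH f v = reH f (i v)"
lemma LH_bl: "bounded_linear (LH f)"
  unfolding LH_def by (rule bounded_linear_compose[OF reH.bounded_linear_right i_bl])
lemma LH_bound: "\<bar>LH f v\<bar> \<le> (norm f * Ki) * norm v"
proof -
  have "\<bar>LH f v\<bar> \<le> norm f * norm (i v)" unfolding LH_def by (rule reH_cs)
  also have "\<dots> \<le> norm f * (norm v * Ki)" using Ki by (intro mult_left_mono) auto
  finally show ?thesis by (simp add: algebra_simps)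
qed
lemma LH_add: "LH (f + g) v = LH f v + LH g v" unfolding LH_def by (simp add: reH.add_left)

definition "Sol t f = lm.sol (Bt t) UNIV (LH f)"
definition "SolD f = lm.sol B VD (LH f)"

lemma lmVD: "lm B VD cc" by (rule lmD[OF VD_sub VD_closed])

lemma Sol: "t \<ge> 0 \<Longrightarrow> Bt t (Sol t f) v = LH f v"
  unfolding Sol_def using lm.sol(2)[OF lmt LH_bl] by blast
lemma SolD: "SolD f \<in> VD" "v \<in> VD \<Longrightarrow> B (SolD f) v = LH f v"
  unfolding SolD_def using lm.sol[OF lmVD LH_bl] by blast+

lemma ceq_iff:
  assumes "\<mu> \<le> 0"
  shows "(\<forall>v. a u v - complex_of_real \<mu> * ipK (j u) (j v) + ipH (i u) (i v) = ipH f (i v))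
     \<longleftrightarrow> (\<forall>v. Bt (-\<mu>) u v = LH f v)"
proof -
  define D where "D v = a u v - complex_of_real \<mu> * ipK (j u) (j v) + ipH (i u) (i v) - ipH f (i v)" for v
  have hRe: "Re (D v) = Bt (-\<mu>) u v - LH f v" for v
    unfolding D_def Bt_def B_def ra_def reH_def reK_def LH_def by simp
  have hcm: "D (cmV c v) = cnj c * D v" for c v
    unfolding D_def by (simp add: a_cmR i_cm j_cm ch_right(2)[OF H] ch_right(2)[OF K] algebra_simps)
  have "(\<forall>v. D v = 0) \<longleftrightarrow> (\<forall>v. Re (D v) = 0)"
  proof
    assume h: "\<forall>v. Re (D v) = 0"
    show "\<forall>v. D v = 0"
    proof
      fix v
      have "Re (D (cmV \<i> v)) = 0" using h by blast
      then have "Im (D v) = 0" using hcm[of \<i> v] by simp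
      then show "D v = 0" using h by (simp add: complex_eq_iff)
    qed
  qed simp
  moreover have "(\<forall>v. a u v - complex_of_real \<mu> * ipK (j u) (j v) + ipH (i u) (i v) = ipH f (i v)) \<longleftrightarrow> (\<forall>v. D v = 0)"
    unfolding D_def by simp
  moreover have "(\<forall>v. Re (D v) = 0) \<longleftrightarrow> (\<forall>v. Bt (-\<mu>) u v = LH f v)" using hRe by simp
  ultimately show ?thesis by simp
qed

lemma VD_cm: "v \<in> VD \<Longrightarrow> cmV c v \<in> VD"
  unfolding VD_def by (simp add: j_cm ch_cm0[OF K])

lemma ceqD_iff:
  "(\<forall>v. j v = 0 \<longrightarrow> a u v + ipH (i u) (i v) = ipH f (i v))
     \<longleftrightarrow> (\<forall>v\<in>VD. B u v = LH f v)"
proof -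
  define D where "D v = a u v + ipH (i u) (i v) - ipH f (i v)" for v
  have hRe: "Re (D v) = B u v - LH f v" for v
    unfolding D_def B_def ra_def reH_def LH_def by simp
  have hcm: "D (cmV c v) = cnj c * D v" for c v
    unfolding D_def by (simp add: a_cmR i_cm ch_right(2)[OF H] algebra_simps)
  have "(\<forall>v\<in>VD. D v = 0) \<longleftrightarrow> (\<forall>v\<in>VD. Re (D v) = 0)"
  proof
    assume h: "\<forall>v\<in>VD. Re (D v) = 0"
    show "\<forall>v\<in>VD. D v = 0"
    proof
      fix v assume v: "v \<in> VD"
      have "Re (D (cmV \<i> v)) = 0" using h VD_cm[OF v] by blast
      then have "Im (D v) = 0" using hcm[of \<i> v] by simp
      then show "D v = 0" using h v by (simp add: complex_eq_iff)
    qed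
  qed simp
  moreover have "(\<forall>v. j v = 0 \<longrightarrow> a u v + ipH (i u) (i v) = ipH f (i v)) \<longleftrightarrow> (\<forall>v\<in>VD. D v = 0)"
    unfolding D_def VD_def by simp
  moreover have "(\<forall>v\<in>VD. Re (D v) = 0) \<longleftrightarrow> (\<forall>v\<in>VD. B u v = LH f v)" using hRe by simp
  ultimately show ?thesis by simp
qed

lemma ex1_mu:
  assumes "\<mu> \<le> 0"
  shows "\<exists>!u. \<forall>v. a u v - complex_of_real \<mu> * ipK (j u) (j v) + ipH (i u) (i v) = ipH f (i v)"
proof -
  have t: "-\<mu> \<ge> 0" using assms by simp
  show ?thesis unfolding ceq_iff[OF assms]
  proof (rule ex1I[of _ "Sol (-\<mu>) f"])
    show "\<forall>v. Bt (- \<mu>) (Sol (- \<mu>) f) v = LH f v" using Sol[OF t] by blast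
    fix u assume "\<forall>v. Bt (- \<mu>) u v = LH f v"
    then show "u = Sol (-\<mu>) f" unfolding Sol_def
      using lm.sol_eq[OF lmt[OF t] LH_bl[of f], of u] by auto
  qed
qed

lemma ex1_D:
  "\<exists>!u. j u = 0 \<and> (\<forall>v. j v = 0 \<longrightarrow> a u v + ipH (i u) (i v) = ipH f (i v))"
proof -
  have eq: "(j u = 0 \<and> (\<forall>v. j v = 0 \<longrightarrow> a u v + ipH (i u) (i v) = ipH f (i v))) \<longleftrightarrow>
      (u \<in> VD \<and> (\<forall>v\<in>VD. B u v = LH f v))" for u
    using ceqD_iff[where u=u and f=f] unfolding VD_def by blast
  show ?thesis unfolding eq
  proof (rule ex1I[of _ "SolD f"])
    show "SolD f \<in> VD \<and> (\<forall>v\<in>VD. B (SolD f) v = LH f v)" using SolD by blast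
    fix u assume "u \<in> VD \<and> (\<forall>v\<in>VD. B u v = LH f v)"
    then show "u = SolD f" unfolding SolD_def
      using lm.sol_eq[OF lmVD LH_bl[of f], of u] by auto
  qed
qed

lemma R_mu_eq:
  assumes m: "\<mu> \<le> 0"
  shows "R_mu a ipH ipK i j \<mu> f = i (Sol (-\<mu>) f)"
proof -
  have t: "-\<mu> \<ge> 0" using m by simp
  have "(THE u. \<forall>v. a u v - complex_of_real \<mu> * ipK (j u) (j v) + ipH (i u) (i v) = ipH f (i v)) = Sol (-\<mu>) f"
  proof (rule the1_equality[OF ex1_mu[OF m]])
    show "\<forall>v. a (Sol (-\<mu>) f) v - complex_of_real \<mu> * ipK (j (Sol (-\<mu>) f)) (j v) + ipH (i (Sol (-\<mu>) f)) (i v) = ipH f (i v)"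
      unfolding ceq_iff[OF m] using Sol[OF t] by blast
  qed
  then show ?thesis unfolding R_mu_def by simp
qed

lemma R_D_eq: "R_D a ipH i j f = i (SolD f)"
proof -
  have "(THE u. j u = 0 \<and> (\<forall>v. j v = 0 \<longrightarrow> a u v + ipH (i u) (i v) = ipH f (i v))) = SolD f"
  proof (rule the1_equality[OF ex1_D])
    show "j (SolD f) = 0 \<and> (\<forall>v. j v = 0 \<longrightarrow> a (SolD f) v + ipH (i (SolD f)) (i v) = ipH f (i v))"
      using ceqD_iff[where u="SolD f" and f=f] SolD unfolding VD_def by auto
  qed
  then show ?thesis unfolding R_D_def by simp
qed

end



context prb begin

interpretation i: bounded_linear i by (rule i_bl)
interpretation j: bounded_linear j by (rule j_bl)
interpretation reH: bounded_bilinear reH by (rule reH_bb)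
interpretation reK: bounded_bilinear reK by (rule reK_bb)
interpretation B: bounded_bilinear B by (rule B_bb)

lemma Sol_add: "t \<ge> 0 \<Longrightarrow> Sol t (f + g) = Sol t f + Sol t g"
  unfolding Sol_def
  by (rule lm.sol_eq[OF lmt LH_bl]) (simp_all add: bounded_bilinear.add_left[OF Bt_bb] LH_add
      lm.sol(2)[OF lmt LH_bl])

lemma Sol_cm:
  assumes t: "t \<ge> 0"
  shows "Sol t (cmH c f) = cmV c (Sol t f)"
proof -
  let ?u = "Sol t f"
  have m: "-t \<le> 0" using t by simp
  have e1: "\<forall>v. a ?u v - complex_of_real (-t) * ipK (j ?u) (j v) + ipH (i ?u) (i v) = ipH f (i v)"
    unfolding ceq_iff[OF m] using Sol[OF t] by simp
  have "\<forall>v. a (cmV c ?u) v - complex_of_real (-t) * ipK (j (cmV c ?u)) (j v) + ipH (i (cmV c ?u)) (i v) = ipH (cmH c f) (i v)"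
  proof
    fix v
    have "a (cmV c ?u) v - complex_of_real (-t) * ipK (j (cmV c ?u)) (j v) + ipH (i (cmV c ?u)) (i v)
        = c * (a ?u v - complex_of_real (-t) * ipK (j ?u) (j v) + ipH (i ?u) (i v))"
      by (simp add: a_cmL j_cm i_cm ch_props(5)[OF K] ch_props(5)[OF H] algebra_simps)
    also have "\<dots> = c * ipH f (i v)" using e1 by simp
    also have "\<dots> = ipH (cmH c f) (i v)" by (simp add: ch_props(5)[OF H])
    finally show "a (cmV c ?u) v - complex_of_real (-t) * ipK (j (cmV c ?u)) (j v) + ipH (i (cmV c ?u)) (i v) = ipH (cmH c f) (i v)" .
  qed
  then have "\<forall>v. Bt t (cmV c ?u) v = LH (cmH c f) v" unfolding ceq_iff[OF m] by simp
  then show ?thesis unfolding Sol_def[of t "cmH c f"]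
    using lm.sol_eq[OF lmt[OF t] LH_bl[of "cmH c f"], of "cmV c ?u"] by simp
qed

lemma Sol_norm: "t \<ge> 0 \<Longrightarrow> norm (Sol t f) \<le> norm f * Ki / cc"
  unfolding Sol_def
  using Ki(1) by (intro lm.sol_norm[OF lmt LH_bl LH_bound]) auto

lemma SolD_add: "SolD (f + g) = SolD f + SolD g"
  unfolding SolD_def
  by (rule lm.sol_eq[OF lmVD LH_bl])
     (auto simp: B.add_left LH_add lm.sol(2)[OF lmVD LH_bl] intro: subspace_add[OF VD_sub] lm.sol(1)[OF lmVD LH_bl])

lemma SolD_cm: "SolD (cmH c f) = cmV c (SolD f)"
proof -
  let ?u = "SolD f"
  have e1: "\<forall>v. j v = 0 \<longrightarrow> a ?u v + ipH (i ?u) (i v) = ipH f (i v)"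
    unfolding ceqD_iff using SolD by simp
  have "\<forall>v. j v = 0 \<longrightarrow> a (cmV c ?u) v + ipH (i (cmV c ?u)) (i v) = ipH (cmH c f) (i v)"
  proof (intro allI impI)
    fix v assume v: "j v = 0"
    have "a (cmV c ?u) v + ipH (i (cmV c ?u)) (i v) = c * (a ?u v + ipH (i ?u) (i v))"
      by (simp add: a_cmL i_cm ch_props(5)[OF H] algebra_simps)
    also have "\<dots> = c * ipH f (i v)" using e1 v by simp
    also have "\<dots> = ipH (cmH c f) (i v)" by (simp add: ch_props(5)[OF H])
    finally show "a (cmV c ?u) v + ipH (i (cmV c ?u)) (i v) = ipH (cmH c f) (i v)" .
  qed
  then have "\<forall>v\<in>VD. B (cmV c ?u) v = LH (cmH c f) v" unfolding ceqD_iff by simp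
  moreover have "cmV c ?u \<in> VD" using VD_cm SolD(1) by blast
  ultimately show ?thesis unfolding SolD_def[of "cmH c f"]
    using lm.sol_eq[OF lmVD LH_bl[of "cmH c f"], of "cmV c ?u"] by simp
qed

lemma SolD_norm: "norm (SolD f) \<le> norm f * Ki / cc"
  unfolding SolD_def
  using Ki(1) by (intro lm.sol_norm[OF lmVD LH_bl LH_bound]) auto

lemma cbl_from:
  assumes "\<And>f g. T (f + g) = T f + T g" "\<And>c f. T (cmH c f) = cmH c (T f)" "\<And>f. norm (T f) \<le> norm f * C"
  shows "cbounded_linear cmH cmH T"
  unfolding cbounded_linear_def
proof
  show "bounded_linear T"
  proof (rule bounded_linear_intro)
    show "T (r *\<^sub>R f) = r *\<^sub>R T f" for r f using assms(2)[of "complex_of_real r" f] by (simp add: cmH_real)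
  qed (use assms in auto)
qed (use assms in auto)

lemma R_mu_cbl: "\<mu> \<le> 0 \<Longrightarrow> cbounded_linear cmH cmH (R_mu a ipH ipK i j \<mu>)"
proof -
  assume m: "\<mu> \<le> 0"
  have t: "-\<mu> \<ge> 0" using m by simp
  have eq: "R_mu a ipH ipK i j \<mu> = (\<lambda>f. i (Sol (-\<mu>) f))" using R_mu_eq[OF m] by (simp add: fun_eq_iff)
  show ?thesis unfolding eq
  proof (rule cbl_from)
    fix f g show "i (Sol (- \<mu>) (f + g)) = i (Sol (- \<mu>) f) + i (Sol (- \<mu>) g)" by (simp add: Sol_add[OF t] i.add)
    fix c show "i (Sol (- \<mu>) (cmH c f)) = cmH c (i (Sol (- \<mu>) f))" by (simp add: Sol_cm[OF t] i_cm)
    have "norm (i (Sol (- \<mu>) f)) \<le> norm (Sol (- \<mu>) f) * Ki" by (rule Ki)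
    also have "\<dots> \<le> norm f * Ki / cc * Ki" using Sol_norm[OF t] Ki by (intro mult_right_mono) auto
    finally show "norm (i (Sol (- \<mu>) f)) \<le> norm f * (Ki / cc * Ki)" by simp
  qed
qed

lemma R_D_cbl: "cbounded_linear cmH cmH (R_D a ipH i j)"
proof -
  have eq: "R_D a ipH i j = (\<lambda>f. i (SolD f))" using R_D_eq by (simp add: fun_eq_iff)
  show ?thesis unfolding eq
  proof (rule cbl_from)
    fix f g show "i (SolD (f + g)) = i (SolD f) + i (SolD g)" by (simp add: SolD_add i.add)
    fix c show "i (SolD (cmH c f)) = cmH c (i (SolD f))" by (simp add: SolD_cm i_cm)
    have "norm (i (SolD f)) \<le> norm (SolD f) * Ki" by (rule Ki)
    also have "\<dots> \<le> norm f * Ki / cc * Ki" using SolD_norm Ki by (intro mult_right_mono) auto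
    finally show "norm (i (SolD f)) \<le> norm f * (Ki / cc * Ki)" by simp
  qed
qed

end



context prb begin

interpretation i: bounded_linear i by (rule i_bl)
interpretation j: bounded_linear j by (rule j_bl)
interpretation reH: bounded_bilinear reH by (rule reH_bb)
interpretation reK: bounded_bilinear reK by (rule reK_bb)
interpretation B: bounded_bilinear B by (rule B_bb)

definition "MB = (SOME K. K > 0 \<and> (\<forall>x y. norm (B x y) \<le> norm x * norm y * K))"
lemma MB: "MB > 0" "\<bar>B x y\<bar> \<le> norm x * norm y * MB"
  using someI_ex[OF B.pos_bounded] unfolding MB_def by auto

definition "S t x = lm.sol (Bt t) UNIV (B x)"
definition "P x = lm.sol B VD (B x)"
definition "zf f = lm.sol B UNIV (LH f)"
definition "Jop s = lm.sol B UNIV (\<lambda>v. reK (j s) (j v))"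

lemma Bx_bl: "bounded_linear (B x)" by (rule B.bounded_linear_right)
lemma Jl_bl: "bounded_linear (\<lambda>v. reK (j s) (j v))"
  by (rule bounded_linear_compose[OF reK.bounded_linear_right j_bl])

lemma S_prop: "t \<ge> 0 \<Longrightarrow> Bt t (S t x) v = B x v"
  unfolding S_def using lm.sol(2)[OF lmt Bx_bl] by blast
lemma P_prop: "P x \<in> VD" "v \<in> VD \<Longrightarrow> B (P x) v = B x v"
  unfolding P_def using lm.sol[OF lmVD Bx_bl] by blast+
lemma zf_prop: "B (zf f) v = LH f v"
  unfolding zf_def using lm.sol(2)[OF lmB LH_bl] by blast
lemma Jop_prop: "B (Jop s) v = reK (j s) (j v)"
  unfolding Jop_def using lm.sol(2)[OF lmB Jl_bl] by blast

lemma Bx_bound: "\<bar>B x v\<bar> \<le> (norm x * MB) * norm v" using MB(2)[of x v] by (simp add: algebra_simps)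

lemma S_norm: "t \<ge> 0 \<Longrightarrow> norm (S t x) \<le> norm x * MB / cc"
  unfolding S_def using MB(1) by (intro lm.sol_norm[OF lmt Bx_bl Bx_bound]) auto
lemma P_norm: "norm (P x) \<le> norm x * MB / cc"
  unfolding P_def using MB(1) by (intro lm.sol_norm[OF lmVD Bx_bl Bx_bound]) auto
lemma zf_norm: "norm (zf f) \<le> norm f * Ki / cc"
  unfolding zf_def using Ki(1) by (intro lm.sol_norm[OF lmB LH_bl LH_bound]) auto

lemma S_diff: "t \<ge> 0 \<Longrightarrow> S t (x - y) = S t x - S t y"
  unfolding S_def[of t "x - y"]
  by (rule lm.sol_eq[OF lmt Bx_bl]) (simp_all add: bounded_bilinear.diff_left[OF Bt_bb] B.diff_left
      S_prop)
lemma P_diff: "P (x - y) = P x - P y"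
  unfolding P_def[of "x - y"]
  by (rule lm.sol_eq[OF lmVD Bx_bl]) (auto simp: B.diff_left P_prop intro: subspace_diff[OF VD_sub])

lemma S_P: "t \<ge> 0 \<Longrightarrow> S t (P x) = P x"
  unfolding S_def[of t "P x"]
  by (rule lm.sol_eq[OF lmt Bx_bl]) (use P_prop(1) in \<open>auto simp: Bt_def VD_def reK.zero_left\<close>)

lemma Sol_S: "t \<ge> 0 \<Longrightarrow> Sol t f = S t (zf f)"
  unfolding Sol_def
  by (rule lm.sol_eq[OF lmt LH_bl]) (simp_all add: S_prop zf_prop)
lemma SolD_P: "SolD f = P (zf f)"
  unfolding SolD_def
  by (rule lm.sol_eq[OF lmVD LH_bl]) (simp_all add: P_prop zf_prop)

lemma Jop_add: "Jop (s + s') = Jop s + Jop s'"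
  unfolding Jop_def[of "s + s'"]
  by (rule lm.sol_eq[OF lmB Jl_bl]) (simp_all add: B.add_left Jop_prop j.add reK.add_left)
lemma Jop_scale: "Jop (r *\<^sub>R s) = r *\<^sub>R Jop s"
  unfolding Jop_def[of "r *\<^sub>R s"]
  by (rule lm.sol_eq[OF lmB Jl_bl]) (simp_all add: B.scaleR_left Jop_prop j.scaleR reK.scaleR_left)
lemma Jop_0: "Jop 0 = 0"
  using Jop_scale[of 0 0] by simp

lemma range_Jop_sub: "subspace (range Jop)"
  unfolding subspace_def
proof (intro conjI ballI allI)
  show "0 \<in> range Jop" using rangeI[of Jop 0] Jop_0 by simp
  fix x y assume "x \<in> range Jop" "y \<in> range Jop"
  then obtain s s' where "x = Jop s" "y = Jop s'" by auto
  then show "x + y \<in> range Jop" using rangeI[of Jop "s + s'"] Jop_add[of s s'] by simp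
next
  fix r :: real and x assume "x \<in> range Jop"
  then obtain s where "x = Jop s" by auto
  then show "r *\<^sub>R x \<in> range Jop" using rangeI[of Jop "r *\<^sub>R s"] Jop_scale[of r s] by simp
qed

lemma perp_in_closure:
  assumes y: "\<forall>v\<in>VD. B y v = 0"
  shows "y \<in> closure (range Jop)"
proof -
  let ?W = "closure (range Jop)"
  have Wsub: "subspace ?W" by (rule subspace_closure_rnv[OF range_Jop_sub])
  have lW: "lm B ?W cc" by (rule lmD[OF Wsub closed_closure])
  define Q where "Q = lm.sol B ?W (B y)"
  have Q1: "Q \<in> ?W" unfolding Q_def by (rule lm.sol(1)[OF lW Bx_bl])
  have Q2: "B Q w = B y w" if "w \<in> ?W" for w unfolding Q_def by (rule lm.sol(2)[OF lW Bx_bl that])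
  note Q = Q1 Q2
  define r where "r = y - Q"
  have rJ: "reK (j s) (j r) = 0" for s
  proof -
    have J: "Jop s \<in> ?W" by (rule closure_subset[THEN subsetD]) (rule rangeI)
    have "B r (Jop s) = B y (Jop s) - B Q (Jop s)" unfolding r_def by (rule B.diff_left)
    also have "\<dots> = 0" using Q2[OF J] by simp
    finally have "B (Jop s) r = 0" using B_sym[of r "Jop s"] by simp
    then show ?thesis using Jop_prop[of s r] by simp
  qed
  have rVD: "r \<in> VD"
  proof -
    have "reK (j r) (j r) = 0" by (rule rJ)
    then have "(norm (j r))^2 = 0" by (simp only: reK_nn)
    then show ?thesis unfolding VD_def by simp
  qed
  have cl: "closed {w. B w r = 0}"
    by (rule closed_Collect_eq) (auto intro: linear_continuous_on B.bounded_linear_left)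
  have "range Jop \<subseteq> {w. B w r = 0}"
  proof
    fix w assume "w \<in> range Jop"
    then obtain s where s: "w = Jop s" by blast
    have "j r = 0" using rVD unfolding VD_def by simp
    then show "w \<in> {w. B w r = 0}" using s Jop_prop[of s r] by (simp add: reK.zero_right)
  qed
  then have Wr: "?W \<subseteq> {w. B w r = 0}" by (rule closure_minimal[OF _ cl])
  have "B r r = B y r - B Q r" unfolding r_def by (rule B.diff_left)
  also have "B y r = 0" using y rVD by blast
  also have "B Q r = 0" using Wr Q1 by blast
  finally have "B r r = 0" by simp
  then have "cc * (norm r)^2 \<le> 0" using cc_coer[of r] by simp
  then have "r = 0" using cc_pos by (simp add: mult_le_0_iff)
  then show ?thesis using Q(1) unfolding r_def by simp
qed

lemma quad_bound:
  fixes Bu t aa b :: real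
  assumes "Bu + t * aa^2 \<le> b * aa" "Bu \<ge> 0" "t > 0" "aa \<ge> 0" "b \<ge> 0"
  shows "Bu \<le> b^2 / t"
proof -
  have "t * Bu \<le> t * (b * aa - t * aa^2)" using assms by (intro mult_left_mono) auto
  moreover have "0 \<le> (b - 2*t*aa)^2" by simp
  ultimately have "4 * (t * Bu) \<le> b^2"
    by (simp add: power2_eq_square algebra_simps)
  then have "t * Bu \<le> b^2" using assms(2,3) by (smt (verit) mult_nonneg_nonneg)
  then show ?thesis using assms(3) by (simp add: field_simps mult.commute)
qed

lemma S_Jop: "t > 0 \<Longrightarrow> cc * (norm (S t (Jop s)))^2 \<le> (norm (j s))^2 / t"
proof -
  assume t: "t > 0"
  let ?u = "S t (Jop s)"
  have "Bt t ?u ?u = B (Jop s) ?u" using S_prop t by simp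
  also have "\<dots> = reK (j s) (j ?u)" by (rule Jop_prop)
  also have "\<dots> \<le> norm (j s) * norm (j ?u)" using reK_cs by (metis abs_le_D1)
  finally have h: "B ?u ?u + t * (norm (j ?u))^2 \<le> norm (j s) * norm (j ?u)"
    unfolding Bt_def reK_nn .
  have "B ?u ?u \<ge> 0" using cc_coer[of ?u] cc_pos by (smt (verit) mult_nonneg_nonneg zero_le_power2)
  then have "B ?u ?u \<le> (norm (j s))^2 / t" using quad_bound[OF h _ t] by simp
  then show ?thesis using cc_coer[of ?u] by simp
qed

lemma S_conv:
  assumes e: "\<epsilon> > 0"
  shows "\<exists>T>0. \<forall>t\<ge>T. norm (S t x - P x) < \<epsilon>"
proof -
  define y where "y = x - P x"
  have hy: "t \<ge> 0 \<Longrightarrow> S t x - P x = S t y" for t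
    unfolding y_def by (simp add: S_diff S_P)
  have "\<forall>v\<in>VD. B y v = 0" unfolding y_def by (simp add: B.diff_left P_prop)
  then have ycl: "y \<in> closure (range Jop)" by (rule perp_in_closure)
  define \<eta> where "\<eta> = \<epsilon> * cc / (2 * MB)"
  have eta: "\<eta> > 0" unfolding \<eta>_def using e cc_pos MB(1) by simp
  obtain s where s: "dist (Jop s) y < \<eta>" using ycl eta unfolding closure_approachable by blast
  define T where "T = 4 * (norm (j s))^2 / (cc * \<epsilon>^2) + 1"
  have "0 \<le> 4 * (norm (j s))^2 / (cc * \<epsilon>^2)" using cc_pos e by simp
  then have T: "T > 0" unfolding T_def by simp
  have "norm (S t x - P x) < \<epsilon>" if t: "t \<ge> T" for t
  proof -
    have t0: "t > 0" "t \<ge> 0" using t T by auto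
    have "S t y = S t (y - Jop s) + S t (Jop s)" using S_diff[OF t0(2), of y "Jop s"] by simp
    then have "norm (S t y) \<le> norm (S t (y - Jop s)) + norm (S t (Jop s))" by (metis norm_triangle_ineq)
    moreover have "norm (S t (y - Jop s)) < \<epsilon> / 2"
    proof -
      have "norm (S t (y - Jop s)) \<le> norm (y - Jop s) * MB / cc" by (rule S_norm[OF t0(2)])
      also have "\<dots> < \<eta> * MB / cc" using s MB(1) cc_pos by (simp add: dist_norm norm_minus_commute divide_strict_right_mono)
      also have "\<dots> = \<epsilon> / 2" unfolding \<eta>_def using MB(1) cc_pos by (simp add: field_simps)
      finally show ?thesis .
    qed
    moreover have "norm (S t (Jop s)) < \<epsilon> / 2"
    proof -
      have "cc * (norm (S t (Jop s)))^2 \<le> (norm (j s))^2 / t" by (rule S_Jop[OF t0(1)])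
      also have "\<dots> \<le> (norm (j s))^2 / T" using t T by (intro divide_left_mono) auto
      also have "\<dots> < cc * (\<epsilon> / 2)^2"
      proof -
        have "4 * (norm (j s))^2 / (cc * \<epsilon>^2) < T" unfolding T_def by simp
        then have "4 * (norm (j s))^2 < T * (cc * \<epsilon>^2)" using cc_pos e by (simp add: divide_less_eq)
        then show ?thesis using T by (simp add: divide_less_eq power_divide algebra_simps)
      qed
      finally have "(norm (S t (Jop s)))^2 < (\<epsilon> / 2)^2" using cc_pos by simp
      then show ?thesis using power2_less_imp_less[of "norm (S t (Jop s))" "\<epsilon> / 2"] e by simp
    qed
    ultimately show ?thesis using hy[OF t0(2)] by simp
  qed
  then show ?thesis using T by blast
qed

end



context prb begin

interpretation i: bounded_linear i by (rule i_bl)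
interpretation j: bounded_linear j by (rule j_bl)
interpretation reH: bounded_bilinear reH by (rule reH_bb)
interpretation reK: bounded_bilinear reK by (rule reK_bb)
interpretation B: bounded_bilinear B by (rule B_bb)

lemma E_norm:
  assumes t: "t \<ge> 0"
  shows "norm (i (S t x - P x)) \<le> (2 * MB / cc * Ki) * norm x"
proof -
  have "norm (i (S t x - P x)) \<le> norm (S t x - P x) * Ki" by (rule Ki)
  also have "norm (S t x - P x) \<le> norm (S t x) + norm (P x)" by (rule norm_triangle_ineq4)
  also have "\<dots> \<le> norm x * MB / cc + norm x * MB / cc" using S_norm[OF t] P_norm by (rule add_mono)
  finally show ?thesis using Ki(1) by (simp add: algebra_simps mult_right_mono)
qed

lemma E_diff: "t \<ge> 0 \<Longrightarrow> i (S t x - P x) - i (S t y - P y) = i (S t (x - y) - P (x - y))"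
  by (simp add: S_diff P_diff i.diff[symmetric] algebra_simps)

lemma zf_diff: "cc * (norm (zf f - zf g))^2 \<le> norm (f - g) * norm (i (zf f) - i (zf g))"
proof -
  let ?w = "zf f - zf g"
  have "cc * (norm ?w)^2 \<le> B ?w ?w" by (rule cc_coer)
  also have "\<dots> = B (zf f) ?w - B (zf g) ?w" by (rule B.diff_left)
  also have "\<dots> = reH (f - g) (i ?w)" unfolding zf_prop LH_def by (simp add: reH.diff_left)
  also have "\<dots> \<le> norm (f - g) * norm (i ?w)" using reH_cs by (metis abs_le_D1)
  finally show ?thesis by (simp add: i.diff)
qed

lemma main_unif:
  assumes e: "\<epsilon> > 0"
  shows "\<exists>T\<ge>0. \<forall>t\<ge>T. \<forall>f. norm f \<le> 1 \<longrightarrow> norm (i (S t (zf f) - P (zf f))) \<le> \<epsilon>"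
proof -
  define C2 where "C2 = 2 * MB / cc * Ki"
  have C2: "C2 > 0" unfolding C2_def using MB(1) cc_pos Ki(1) by simp
  define \<eta> where "\<eta> = \<epsilon> / (2 * C2)"
  have eta: "\<eta> > 0" unfolding \<eta>_def using e C2 by simp
  define R where "R = Ki / cc + 1"
  have R: "R > 0" unfolding R_def using Ki(1) cc_pos by (simp add: add_pos_pos)
  define ee where "ee = cc * \<eta>^2 / (4 * R)"
  have ee: "ee > 0" unfolding ee_def using cc_pos eta R by simp
  define Kc where "Kc = closure (i ` ball 0 1)"
  have cpt: "compact Kc" using i_compact unfolding Kc_def compact_op_def by blast
  have "\<exists>k. finite k \<and> k \<subseteq> Kc \<and> Kc \<subseteq> (\<Union>x\<in>k. ball x ee)"
    by (rule seq_compact_imp_totally_bounded[OF compact_imp_seq_compact[OF cpt], rule_format, OF ee])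
  then obtain k where k: "finite k" "k \<subseteq> Kc" "Kc \<subseteq> (\<Union>x\<in>k. ball x ee)"
    by (elim exE conjE)
  define PP where "PP x g \<longleftrightarrow> norm g \<le> 1 \<and> dist x (i ((1/R) *\<^sub>R zf g)) < ee" for x g
  define gof where "gof x = (SOME g. PP x g)" for x
  define G where "G = gof ` {x\<in>k. \<exists>g. PP x g}"
  have Gfin: "finite G" unfolding G_def using k(1) by simp
  have gof: "PP x (gof x)" if "\<exists>g. PP x g" for x unfolding gof_def using someI_ex[OF that] .
  define \<epsilon>1 where "\<epsilon>1 = \<epsilon> / (2 * Ki)"
  have e1: "\<epsilon>1 > 0" unfolding \<epsilon>1_def using e Ki(1) by simp
  have "\<forall>g\<in>G. eventually (\<lambda>t. norm (S t (zf g) - P (zf g)) < \<epsilon>1) at_top"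
  proof
    fix g
    obtain T where "T > 0" "\<forall>t\<ge>T. norm (S t (zf g) - P (zf g)) < \<epsilon>1" using S_conv[OF e1] by blast
    then show "eventually (\<lambda>t. norm (S t (zf g) - P (zf g)) < \<epsilon>1) at_top"
      unfolding eventually_at_top_linorder by blast
  qed
  then have "eventually (\<lambda>t. \<forall>g\<in>G. norm (S t (zf g) - P (zf g)) < \<epsilon>1) at_top"
    by (rule eventually_ball_finite[OF Gfin, of "\<lambda>t g. norm (S t (zf g) - P (zf g)) < \<epsilon>1"])
  then obtain N where N: "\<forall>t\<ge>N. \<forall>g\<in>G. norm (S t (zf g) - P (zf g)) < \<epsilon>1"
    unfolding eventually_at_top_linorder by (elim exE) simp
  define T where "T = max N 0"
  have "norm (i (S t (zf f) - P (zf f))) \<le> \<epsilon>" if t: "t \<ge> T" and f: "norm f \<le> 1" for t f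
  proof -
    have t0: "t \<ge> 0" using t unfolding T_def by simp
    have tN: "t \<ge> N" using t unfolding T_def by simp
    have "norm ((1/R) *\<^sub>R zf f) < 1"
    proof -
      have "norm (zf f) \<le> norm f * Ki / cc" by (rule zf_norm)
      also have "\<dots> \<le> Ki / cc" using f Ki(1) cc_pos by (simp add: mult_left_le_one_le divide_right_mono)
      also have "\<dots> < R" unfolding R_def by simp
      finally show ?thesis using R by (simp add: divide_less_eq)
    qed
    then have "i ((1/R) *\<^sub>R zf f) \<in> Kc" unfolding Kc_def
      by (intro closure_subset[THEN subsetD]) auto
    then obtain x where x: "x \<in> k" "dist x (i ((1/R) *\<^sub>R zf f)) < ee" using k(3) by auto
    then have ex: "\<exists>g. PP x g" unfolding PP_def using f by blast
    define g where "g = gof x"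
    have g: "PP x g" unfolding g_def by (rule gof[OF ex])
    have gG: "g \<in> G" unfolding G_def g_def using x(1) ex by blast
    have dfg: "dist (i ((1/R) *\<^sub>R zf f)) (i ((1/R) *\<^sub>R zf g)) < 2 * ee"
      using x(2) g unfolding PP_def by (smt (verit) dist_commute dist_triangle)
    have "dist (i ((1/R) *\<^sub>R zf f)) (i ((1/R) *\<^sub>R zf g)) = (1/R) * norm (i (zf f) - i (zf g))"
      using R by (simp add: dist_norm i.scaleR flip: scaleR_diff_right)
    with dfg have di: "norm (i (zf f) - i (zf g)) < 2 * ee * R" using R by (simp add: field_simps)
    have "cc * (norm (zf f - zf g))^2 \<le> norm (f - g) * norm (i (zf f) - i (zf g))" by (rule zf_diff)
    also have "\<dots> \<le> 2 * norm (i (zf f) - i (zf g))"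
    proof (rule mult_right_mono)
      have "norm (f - g) \<le> norm f + norm g" by (rule norm_triangle_ineq4)
      then show "norm (f - g) \<le> 2" using f g unfolding PP_def by simp
    qed simp
    also have "\<dots> < 2 * (2 * ee * R)" using di by (simp add: mult.commute mult.left_commute)
    also have "\<dots> = cc * \<eta>^2" unfolding ee_def using R by simp
    finally have "(norm (zf f - zf g))^2 < \<eta>^2" using cc_pos by simp
    then have dz: "norm (zf f - zf g) < \<eta>" using power2_less_imp_less[of "norm (zf f - zf g)" \<eta>] eta by simp
    have "norm (i (S t (zf f) - P (zf f))) \<le>
        norm (i (S t (zf f) - P (zf f)) - i (S t (zf g) - P (zf g))) + norm (i (S t (zf g) - P (zf g)))"
      using norm_triangle_sub[of "i (S t (zf f) - P (zf f))" "i (S t (zf g) - P (zf g))"] by (simp add: add.commute)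
    also have "norm (i (S t (zf f) - P (zf f)) - i (S t (zf g) - P (zf g))) \<le> C2 * norm (zf f - zf g)"
      unfolding E_diff[OF t0] C2_def by (rule E_norm[OF t0])
    also have "\<dots> \<le> C2 * \<eta>" using dz C2 by simp
    also have "C2 * \<eta> = \<epsilon> / 2" unfolding \<eta>_def using C2 by simp
    also have "norm (i (S t (zf g) - P (zf g))) \<le> norm (S t (zf g) - P (zf g)) * Ki" by (rule Ki)
    also have "\<dots> \<le> \<epsilon>1 * Ki" using N tN gG Ki(1) by (intro mult_right_mono) (auto intro: less_imp_le)
    also have "\<epsilon>1 * Ki = \<epsilon> / 2" unfolding \<epsilon>1_def using Ki(1) by simp
    finally show ?thesis by simp
  qed
  moreover have "T \<ge> 0" unfolding T_def by simp
  ultimately show ?thesis by blast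
qed

lemma conv: "((\<lambda>\<mu>. onorm (\<lambda>f. R_mu a ipH ipK i j \<mu> f - R_D a ipH i j f)) \<longlongrightarrow> 0) at_bot"
proof (rule tendstoI)
  fix e :: real assume e: "e > 0"
  obtain T where T: "T \<ge> 0" "\<forall>t\<ge>T. \<forall>f. norm f \<le> 1 \<longrightarrow> norm (i (S t (zf f) - P (zf f))) \<le> e/2"
    using main_unif[of "e/2"] e by auto
  have "dist (onorm (\<lambda>f. R_mu a ipH ipK i j \<mu> f - R_D a ipH i j f)) 0 < e" if m: "\<mu> \<le> - T" for \<mu>
  proof -
    have m0: "\<mu> \<le> 0" and tT: "-\<mu> \<ge> T" and t0: "-\<mu> \<ge> 0" using m T(1) by auto
    define D where "D f = R_mu a ipH ipK i j \<mu> f - R_D a ipH i j f" for f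
    have Deq: "D f = i (S (-\<mu>) (zf f) - P (zf f))" for f
      unfolding D_def R_mu_eq[OF m0] R_D_eq Sol_S[OF t0] SolD_P by (simp add: i.diff)
    have bl: "bounded_linear D" unfolding D_def
      using R_mu_cbl[OF m0] R_D_cbl unfolding cbounded_linear_def by (intro bounded_linear_sub) auto
    interpret D: bounded_linear D by (rule bl)
    have Dle: "norm (D f) \<le> e/2 * norm f" for f
    proof (cases "f = 0")
      case True then show ?thesis by (simp add: D.zero)
    next
      case False
      define f1 where "f1 = (1 / norm f) *\<^sub>R f"
      have n1: "norm f1 \<le> 1" unfolding f1_def using False by simp
      have "D f = norm f *\<^sub>R D f1" unfolding f1_def using False by (simp add: D.scaleR)
      then have eq: "norm (D f) = norm f * norm (D f1)" by simp
      have "norm (D f1) \<le> e/2" unfolding Deq using T(2) tT n1 by blast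
      then have "norm f * norm (D f1) \<le> norm f * (e/2)" by (rule mult_left_mono) simp
      then show ?thesis using eq by (simp add: mult.commute)
    qed
    have "onorm D \<le> e/2" using e Dle by (intro onorm_bound) auto
    moreover have "onorm D \<ge> 0" by (rule onorm_pos_le[OF bl])
    ultimately show ?thesis unfolding D_def[abs_def] using e by simp
  qed
  then show "eventually (\<lambda>\<mu>. dist (onorm (\<lambda>f. R_mu a ipH ipK i j \<mu> f - R_D a ipH i j f)) 0 < e) at_bot"
    unfolding eventually_at_bot_linorder by blast
qed

end

theorem lemma2p3:
  fixes cmV :: "complex \<Rightarrow> 'v::banach \<Rightarrow> 'v" and ipV :: "'v \<Rightarrow> 'v \<Rightarrow> complex"
    and cmH :: "complex \<Rightarrow> 'h::banach \<Rightarrow> 'h" and ipH :: "'h \<Rightarrow> 'h \<Rightarrow> complex"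
    and cmK :: "complex \<Rightarrow> 'k::banach \<Rightarrow> 'k" and ipK :: "'k \<Rightarrow> 'k \<Rightarrow> complex"
    and i :: "'v \<Rightarrow> 'h" and j :: "'v \<Rightarrow> 'k" and a :: "'v \<Rightarrow> 'v \<Rightarrow> complex"
  assumes V: "complex_hilbert cmV ipV"
    and H: "complex_hilbert cmH ipH"
    and K: "complex_hilbert cmK ipK"
    and i_compact: "compact_op cmV cmH i" and i_inj: "inj i"
    and j_compact: "compact_op cmV cmK j"
    and a_form: "sesquilinear_cont cmV a"
    and a_pos: "\<forall>u. Im (a u u) = 0 \<and> Re (a u u) \<ge> 0"
    and a_sym: "\<forall>u v. a v u = cnj (a u v)"
    and a_ell: "\<exists>\<omega>>0. \<exists>\<delta>>0. \<forall>u. Re (a u u) + \<omega> * (norm (i u))\<^sup>2 \<ge> \<delta> * (norm u)\<^sup>2"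
  shows "(\<forall>\<mu>\<le>0. \<forall>f. \<exists>!u. \<forall>v. a u v - complex_of_real \<mu> * ipK (j u) (j v) + ipH (i u) (i v) = ipH f (i v))
       \<and> (\<forall>f. \<exists>!u. j u = 0 \<and> (\<forall>v. j v = 0 \<longrightarrow> a u v + ipH (i u) (i v) = ipH f (i v)))
       \<and> (\<forall>\<mu>\<le>0. cbounded_linear cmH cmH (R_mu a ipH ipK i j \<mu>))
       \<and> cbounded_linear cmH cmH (R_D a ipH i j)
       \<and> ((\<lambda>\<mu>. onorm (\<lambda>f. R_mu a ipH ipK i j \<mu> f - R_D a ipH i j f)) \<longlongrightarrow> 0) at_bot"
proof -
  interpret prb cmV ipV cmH ipH cmK ipK i j a
    by (rule prb.intro[OF V H K i_compact i_inj j_compact a_form a_pos a_sym a_ell])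
  show ?thesis
  proof (intro conjI allI impI)
    fix \<mu> :: real and f assume "\<mu> \<le> 0"
    then show "\<exists>!u. \<forall>v. a u v - complex_of_real \<mu> * ipK (j u) (j v) + ipH (i u) (i v) = ipH f (i v)"
      by (rule ex1_mu)
  next
    fix f show "\<exists>!u. j u = 0 \<and> (\<forall>v. j v = 0 \<longrightarrow> a u v + ipH (i u) (i v) = ipH f (i v))"
      by (rule ex1_D)
  next
    fix \<mu> :: real assume "\<mu> \<le> 0"
    then show "cbounded_linear cmH cmH (R_mu a ipH ipK i j \<mu>)" by (rule R_mu_cbl)
  next
    show "cbounded_linear cmH cmH (R_D a ipH i j)" by (rule R_D_cbl)
  next
    show "((\<lambda>\<mu>. onorm (\<lambda>f. R_mu a ipH ipK i j \<mu> f - R_D a ipH i j f)) \<longlongrightarrow> 0) at_bot"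
      by (rule conv)
  qed
qed

end
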